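(* Let $S$ be an inductive $E$-demigroup with associated function $\cdot:S\times E\to E$. Then $C^d_E(S)$ is an inductive constellation, and for all $(f,s)\in C^d_E(S)$ and $e\in E$ the co-restriction is $$(f,s)|(e,e)=\big(f\wedge(s\cdot e),\,(f\wedge(s\cdot e))s\big),$$ where $\wedge$ is the meet in $(E,\le_r)$.
   Context: For a semigroup $S$, $E(S)$ is its set of idempotents; for $e,f\in E(S)$, $e\le_r f$ iff $e=ef$. $E\subseteq E(S)$ is right pre-reduced if $e=ef$ and $f=fe$ imply $e=f$ for $e,f\in E$. A demigroup is a semigroup $S$ with unary $d$ such that $d(x)\in E(S)$, $d(x)x=x$, $d(xy)=d(xd(y))$ for all $x,y$. For $E\subseteq E(S)$, $S$ is an $E$-demigroup if $d(s)\in E$ for all $s$ and $ed(e)=e$ for all $e\in E$. It is inductive if $E$ is right pre-reduced, $(E,\le_r)$ is a meet-semilattice with meet $\wedge$, and there is a function $\cdot:S\times E\to E$ with (I1) for all $t\in S$, $e\in E$, $s\in S$: ($ste=st$ and $sd(t)=s$) iff $s(t\cdot e)=s$; (I2) for $s\in S$, $e,f\in E$: $se=sf=s$ implies $s(e\wedge f)=s$. $C_E(S)=\{(e,s)\in E\times S\mid es=s\}$ with partial product $(e,s)\circ(f,t)=(e,st)$ defined exactly when $sf=s$, and $D((e,s))=(e,e)$; $C^d_E(S)=\{(e,s)\in C_E(S)\mid d(e)=d(s)\}$ with restricted operations. A constellation is a set $P$ with partial binary $\circ$ and unary $D$ such that (C1) if $x\circ(y\circ z)$ exists then so does $(x\circ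 y)\circ z$ and they are equal; (C2) if $x\circ y$ and $y\circ z$ exist then $x\circ(y\circ z)$ exists; (C3) $D(x)$ is the unique right identity $e$ (i.e. $a\circ e=a$ whenever defined) with $e\circ x=x$. Natural quasiorder: $s\le t$ iff $D(s)\circ t$ exists and equals $s$; normal if this is a partial order. $P$ is inductive if it is normal and (O4) for all $e\in D(P)=\{D(x)\mid x\in P\}$ and $a\in P$ there is a largest $x$ (natural order) with $x\le a$ and $x\circ e$ defined, denoted $a|e$ (the co-restriction of $a$ to $e$); (O5) for $x,y\in P$, $e\in D(P)$, if $x\circ y$ exists then $D((x\circ y)|e)=D(x|D(y|e))$. *)

theory Defs
  imports Main
begin

definition semigroup_op :: "('a \<Rightarrow> 'a \<Rightarrow> 'a) \<Rightarrow> bool" where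
  "semigroup_op m \<longleftrightarrow> (\<forall>x y z. m (m x y) z = m x (m y z))"

definition idempotents :: "('a \<Rightarrow> 'a \<Rightarrow> 'a) \<Rightarrow> 'a set" where
  "idempotents m = {e. m e e = e}"

definition le_r :: "('a \<Rightarrow> 'a \<Rightarrow> 'a) \<Rightarrow> 'a \<Rightarrow> 'a \<Rightarrow> bool" where
  "le_r m e f \<longleftrightarrow> e = m e f"

definition right_pre_reduced :: "('a \<Rightarrow> 'a \<Rightarrow> 'a) \<Rightarrow> 'a set \<Rightarrow> bool" where
  "right_pre_reduced m E \<longleftrightarrow> E \<subseteq> idempotents m \<and>
     (\<forall>e\<in>E. \<forall>f\<in>E. e = m e f \<and> f = m f e \<longrightarrow> e = f)"

definition demigroup :: "('a \<Rightarrow> 'a \<Rightarrow> 'a) \<Rightarrow> ('a \<Rightarrow> 'a) \<Rightarrow> bool" where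
  "demigroup m d \<longleftrightarrow> semigroup_op m \<and>
     (\<forall>x. d x \<in> idempotents m) \<and> (\<forall>x. m (d x) x = x) \<and>
     (\<forall>x y. d (m x y) = d (m x (d y)))"

definition E_demigroup :: "('a \<Rightarrow> 'a \<Rightarrow> 'a) \<Rightarrow> ('a \<Rightarrow> 'a) \<Rightarrow> 'a set \<Rightarrow> bool" where
  "E_demigroup m d E \<longleftrightarrow> demigroup m d \<and> E \<subseteq> idempotents m \<and>
     (\<forall>s. d s \<in> E) \<and> (\<forall>e\<in>E. m e (d e) = e)"

definition is_meet_semilattice :: "('a \<Rightarrow> 'a \<Rightarrow> 'a) \<Rightarrow> 'a set \<Rightarrow> ('a \<Rightarrow> 'a \<Rightarrow> 'a) \<Rightarrow> bool" where
  "is_meet_semilattice m E w \<longleftrightarrow>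
     (\<forall>e\<in>E. le_r m e e) \<and>
     (\<forall>e\<in>E. \<forall>f\<in>E. \<forall>g\<in>E. le_r m e f \<and> le_r m f g \<longrightarrow> le_r m e g) \<and>
     (\<forall>e\<in>E. \<forall>f\<in>E. le_r m e f \<and> le_r m f e \<longrightarrow> e = f) \<and>
     (\<forall>e\<in>E. \<forall>f\<in>E. w e f \<in> E \<and> le_r m (w e f) e \<and> le_r m (w e f) f \<and>
        (\<forall>g\<in>E. le_r m g e \<and> le_r m g f \<longrightarrow> le_r m g (w e f)))"

text \<open>Inductive E-demigroup with meet w and associated function dot (written s \<cdot> e = dot s e).\<close>
definition inductive_E_demigroup ::
  "('a \<Rightarrow> 'a \<Rightarrow> 'a) \<Rightarrow> ('a \<Rightarrow> 'a) \<Rightarrow> 'a set \<Rightarrow> ('a \<Rightarrow> 'a \<Rightarrow> 'a) \<Rightarrow> ('a \<Rightarrow> 'a \<Rightarrow> 'a) \<Rightarrow> bool" where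
  "inductive_E_demigroup m d E w dot \<longleftrightarrow>
     E_demigroup m d E \<and> right_pre_reduced m E \<and> is_meet_semilattice m E w \<and>
     (\<forall>t. \<forall>e\<in>E. dot t e \<in> E) \<and>
     (\<forall>t s. \<forall>e\<in>E. (m (m s t) e = m s t \<and> m s (d t) = s) \<longleftrightarrow> m s (dot t e) = s) \<and>
     (\<forall>s. \<forall>e\<in>E. \<forall>f\<in>E. m s e = s \<and> m s f = s \<longrightarrow> m s (w e f) = s)"

text \<open>A partial algebra: carrier P, partial product c (None = undefined), unary D.
  Closure of P under the operations is part of being a partial algebra on P.\<close>

definition defined :: "('b \<Rightarrow> 'b \<Rightarrow> 'b option) \<Rightarrow> 'b \<Rightarrow> 'b \<Rightarrow> bool" where
  "defined c x y \<longleftrightarrow> c x y \<noteq> None"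

definition right_identity :: "'b set \<Rightarrow> ('b \<Rightarrow> 'b \<Rightarrow> 'b option) \<Rightarrow> 'b \<Rightarrow> bool" where
  "right_identity P c e \<longleftrightarrow> e \<in> P \<and> (\<forall>a\<in>P. c a e \<noteq> None \<longrightarrow> c a e = Some a)"

definition constellation :: "'b set \<Rightarrow> ('b \<Rightarrow> 'b \<Rightarrow> 'b option) \<Rightarrow> ('b \<Rightarrow> 'b) \<Rightarrow> bool" where
  "constellation P c D \<longleftrightarrow>
     (\<forall>x\<in>P. \<forall>y\<in>P. \<forall>z. c x y = Some z \<longrightarrow> z \<in> P) \<and>
     (\<forall>x\<in>P. D x \<in> P) \<and>
     \<comment> \<open>(C1)\<close>
     (\<forall>x\<in>P. \<forall>y\<in>P. \<forall>z\<in>P. \<forall>w v. c y z = Some w \<and> c x w = Some v \<longrightarrow>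
        (\<exists>u. c x y = Some u \<and> c u z = Some v)) \<and>
     \<comment> \<open>(C2)\<close>
     (\<forall>x\<in>P. \<forall>y\<in>P. \<forall>z\<in>P. c x y \<noteq> None \<and> c y z \<noteq> None \<longrightarrow>
        (\<exists>w. c y z = Some w \<and> c x w \<noteq> None)) \<and>
     \<comment> \<open>(C3)\<close>
     (\<forall>x\<in>P. right_identity P c (D x) \<and> c (D x) x = Some x \<and>
        (\<forall>e. right_identity P c e \<and> c e x = Some x \<longrightarrow> e = D x))"

definition nat_le :: "('b \<Rightarrow> 'b \<Rightarrow> 'b option) \<Rightarrow> ('b \<Rightarrow> 'b) \<Rightarrow> 'b \<Rightarrow> 'b \<Rightarrow> bool" where
  "nat_le c D s t \<longleftrightarrow> c (D s) t = Some s"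

definition normal_constellation :: "'b set \<Rightarrow> ('b \<Rightarrow> 'b \<Rightarrow> 'b option) \<Rightarrow> ('b \<Rightarrow> 'b) \<Rightarrow> bool" where
  "normal_constellation P c D \<longleftrightarrow> constellation P c D \<and>
     (\<forall>x\<in>P. nat_le c D x x) \<and>
     (\<forall>x\<in>P. \<forall>y\<in>P. \<forall>z\<in>P. nat_le c D x y \<and> nat_le c D y z \<longrightarrow> nat_le c D x z) \<and>
     (\<forall>x\<in>P. \<forall>y\<in>P. nat_le c D x y \<and> nat_le c D y x \<longrightarrow> x = y)"

definition is_corestr :: "'b set \<Rightarrow> ('b \<Rightarrow> 'b \<Rightarrow> 'b option) \<Rightarrow> ('b \<Rightarrow> 'b) \<Rightarrow> 'b \<Rightarrow> 'b \<Rightarrow> 'b \<Rightarrow> bool" where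
  "is_corestr P c D a e x \<longleftrightarrow> x \<in> P \<and> nat_le c D x a \<and> c x e \<noteq> None \<and>
     (\<forall>y\<in>P. nat_le c D y a \<and> c y e \<noteq> None \<longrightarrow> nat_le c D y x)"

definition corestr :: "'b set \<Rightarrow> ('b \<Rightarrow> 'b \<Rightarrow> 'b option) \<Rightarrow> ('b \<Rightarrow> 'b) \<Rightarrow> 'b \<Rightarrow> 'b \<Rightarrow> 'b" where
  "corestr P c D a e = (THE x. is_corestr P c D a e x)"

definition inductive_constellation :: "'b set \<Rightarrow> ('b \<Rightarrow> 'b \<Rightarrow> 'b option) \<Rightarrow> ('b \<Rightarrow> 'b) \<Rightarrow> bool" where
  "inductive_constellation P c D \<longleftrightarrow> normal_constellation P c D \<and>
     \<comment> \<open>(O4)\<close>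
     (\<forall>e\<in>D ` P. \<forall>a\<in>P. \<exists>x. is_corestr P c D a e x) \<and>
     \<comment> \<open>(O5)\<close>
     (\<forall>x\<in>P. \<forall>y\<in>P. \<forall>e\<in>D ` P. \<forall>z. c x y = Some z \<longrightarrow>
        D (corestr P c D z e) = D (corestr P c D x (D (corestr P c D y e))))"

definition CE :: "('a \<Rightarrow> 'a \<Rightarrow> 'a) \<Rightarrow> 'a set \<Rightarrow> ('a \<times> 'a) set" where
  "CE m E = {(e, s). e \<in> E \<and> m e s = s}"

definition CdE :: "('a \<Rightarrow> 'a \<Rightarrow> 'a) \<Rightarrow> ('a \<Rightarrow> 'a) \<Rightarrow> 'a set \<Rightarrow> ('a \<times> 'a) set" where
  "CdE m d E = {(e, s) \<in> CE m E. d e = d s}"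

definition C_comp :: "('a \<Rightarrow> 'a \<Rightarrow> 'a) \<Rightarrow> 'a \<times> 'a \<Rightarrow> 'a \<times> 'a \<Rightarrow> ('a \<times> 'a) option" where
  "C_comp m x y = (case x of (e, s) \<Rightarrow> case y of (f, t) \<Rightarrow>
      if m s f = s then Some (e, m s t) else None)"

definition C_D :: "'a \<times> 'a \<Rightarrow> 'a \<times> 'a" where
  "C_D x = (fst x, fst x)"

end

theory Submission imports Defs begin

lemma C_comp_simp[simp]: "C_comp m (a,s) (b,t) = (if m s b = s then Some (a, m s t) else None)"
  by (simp add: C_comp_def)
lemma C_D_simp[simp]: "C_D (a,s) = (a,a)" by (simp add: C_D_def)
lemma nat_le_iff: "nat_le (C_comp m) C_D (a,s) (b,t) \<longleftrightarrow> m a b = a \<and> m a t = s"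
  by (auto simp: nat_le_def)
lemma CdE_iff: "(a,s) \<in> CdE m d E \<longleftrightarrow> a \<in> E \<and> m a s = s \<and> d a = d s"
  by (simp add: CdE_def CE_def)

locale ied =
  fixes m :: "'a \<Rightarrow> 'a \<Rightarrow> 'a" and d :: "'a \<Rightarrow> 'a" and E :: "'a set"
    and w :: "'a \<Rightarrow> 'a \<Rightarrow> 'a" and dot :: "'a \<Rightarrow> 'a \<Rightarrow> 'a"
  assumes ind: "inductive_E_demigroup m d E w dot"
begin

lemma parts: "E_demigroup m d E" "right_pre_reduced m E" "is_meet_semilattice m E w"
  "\<forall>t. \<forall>e\<in>E. dot t e \<in> E"
  "\<forall>t s. \<forall>e\<in>E. (m (m s t) e = m s t \<and> m s (d t) = s) \<longleftrightarrow> m s (dot t e) = s"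
  "\<forall>s. \<forall>e\<in>E. \<forall>f\<in>E. m s e = s \<and> m s f = s \<longrightarrow> m s (w e f) = s"
  using ind unfolding inductive_E_demigroup_def by blast+

lemma dparts: "demigroup m d" "E \<subseteq> idempotents m" "\<forall>s. d s \<in> E" "\<forall>e\<in>E. m e (d e) = e"
  using parts(1) unfolding E_demigroup_def by blast+

lemma assoc: "m (m x y) z = m x (m y z)"
  using dparts(1) unfolding demigroup_def semigroup_op_def by blast
lemma idem: "e \<in> E \<Longrightarrow> m e e = e"
  using dparts(2) unfolding idempotents_def by blast
lemma dE: "d x \<in> E"
  using dparts(3) by blast
lemma dl: "m (d x) x = x"
  using dparts(1) unfolding demigroup_def by blast
lemma dcong: "d (m x y) = d (m x (d y))"
  using dparts(1) unfolding demigroup_def by blast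
lemma edd: "e \<in> E \<Longrightarrow> m e (d e) = e"
  using dparts(4) by blast
lemma meetparts: "\<forall>e\<in>E. \<forall>f\<in>E. w e f \<in> E \<and> le_r m (w e f) e \<and> le_r m (w e f) f \<and>
        (\<forall>g\<in>E. le_r m g e \<and> le_r m g f \<longrightarrow> le_r m g (w e f))"
  using parts(3) unfolding is_meet_semilattice_def by blast
lemma wE: "e \<in> E \<Longrightarrow> f \<in> E \<Longrightarrow> w e f \<in> E"
  using meetparts by blast
lemma w1: "e \<in> E \<Longrightarrow> f \<in> E \<Longrightarrow> m (w e f) e = w e f"
  using meetparts unfolding le_r_def by metis
lemma w2: "e \<in> E \<Longrightarrow> f \<in> E \<Longrightarrow> m (w e f) f = w e f"
  using meetparts unfolding le_r_def by metis
lemma antisym: "e \<in> E \<Longrightarrow> f \<in> E \<Longrightarrow> m e f = e \<Longrightarrow> m f e = f \<Longrightarrow> e = f"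
  using parts(2) unfolding right_pre_reduced_def by metis
lemma dotE: "e \<in> E \<Longrightarrow> dot t e \<in> E"
  using parts(4) by blast
lemma I1: "e \<in> E \<Longrightarrow> (m (m s t) e = m s t \<and> m s (d t) = s) \<longleftrightarrow> m s (dot t e) = s"
  using parts(5) by blast
lemma I2: "e \<in> E \<Longrightarrow> f \<in> E \<Longrightarrow> m s e = s \<Longrightarrow> m s f = s \<Longrightarrow> m s (w e f) = s"
  using parts(6) by blast

abbreviation "P \<equiv> CdE m d E"

lemma ed_eq: "(a,s) \<in> P \<Longrightarrow> m a (d s) = a"
  using edd[of a] by (auto simp: CdE_iff)

lemma ed_le: "(a,s) \<in> P \<Longrightarrow> m b a = b \<Longrightarrow> m b (d s) = b"
  by (metis assoc ed_eq)

lemma core: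
  assumes fs: "(f,s) \<in> P" and g: "g \<in> E"
  shows "is_corestr P (C_comp m) C_D (f,s) (g,g) (w f (dot s g), m (w f (dot s g)) s)"
proof -
  define h where "h = w f (dot s g)"
  have fE: "f \<in> E" using fs by (simp add: CdE_iff)
  have hE: "h \<in> E" using wE[OF fE dotE[OF g]] h_def by simp
  have hf: "m h f = h" using w1[OF fE dotE[OF g]] h_def by simp
  have hd: "m h (dot s g) = h" using w2[OF fE dotE[OF g]] h_def by simp
  have h1: "m (m h s) g = m h s" and h2: "m h (d s) = h" using I1[OF g] hd by blast+
  have "m h (m h s) = m h s" using idem[OF hE] by (metis assoc)
  moreover have "d h = d (m h s)" using dcong[of h s] h2 by simp
  ultimately have inP: "(h, m h s) \<in> P" using hE by (simp add: CdE_iff)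
  show ?thesis unfolding is_corestr_def h_def[symmetric]
  proof (intro conjI ballI impI)
    show "(h, m h s) \<in> P" by fact
    show "nat_le (C_comp m) C_D (h, m h s) (f, s)" using hf by (simp add: nat_le_iff)
    show "C_comp m (h, m h s) (g, g) \<noteq> None" using h1 by simp
  next
    fix y assume y: "y \<in> P" "nat_le (C_comp m) C_D y (f, s) \<and> C_comp m y (g, g) \<noteq> None"
    obtain b r where br: "y = (b,r)" by (cases y)
    have bE: "b \<in> E" using y br by (simp add: CdE_iff)
    have bf: "m b f = b" and r: "r = m b s" using y br by (auto simp: nat_le_iff)
    have rg: "m r g = r" using y br by (auto split: if_splits)
    have bds: "m b (d s) = b" using ed_le[OF fs bf] .
    have "m b (dot s g) = b" using I1[OF g, of b s] rg r bds by simp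
    then have "m b h = b" unfolding h_def using I2[OF fE dotE[OF g] bf] by simp
    then show "nat_le (C_comp m) C_D y (h, m h s)" using br r by (simp add: nat_le_iff assoc[symmetric])
  qed
qed


lemma nat_antisym: "(a,s) \<in> P \<Longrightarrow> (b,t) \<in> P \<Longrightarrow> nat_le (C_comp m) C_D (a,s) (b,t) \<Longrightarrow> nat_le (C_comp m) C_D (b,t) (a,s) \<Longrightarrow> (a,s) = (b,t)"
  unfolding nat_le_iff CdE_iff using antisym by metis

lemma nat_antisym': "x \<in> P \<Longrightarrow> y \<in> P \<Longrightarrow> nat_le (C_comp m) C_D x y \<Longrightarrow> nat_le (C_comp m) C_D y x \<Longrightarrow> x = y"
  using nat_antisym by (cases x, cases y) blast

lemma corestr_eq:
  assumes fs: "(f,s) \<in> P" and g: "g \<in> E"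
  shows "corestr P (C_comp m) C_D (f,s) (g,g) = (w f (dot s g), m (w f (dot s g)) s)"
  unfolding corestr_def
proof (rule the_equality)
  show "is_corestr P (C_comp m) C_D (f, s) (g, g) (w f (dot s g), m (w f (dot s g)) s)"
    by (rule core[OF fs g])
  fix x assume x: "is_corestr P (C_comp m) C_D (f, s) (g, g) x"
  have c: "is_corestr P (C_comp m) C_D (f, s) (g, g) (w f (dot s g), m (w f (dot s g)) s)"
    by (rule core[OF fs g])
  from x c show "x = (w f (dot s g), m (w f (dot s g)) s)"
    unfolding is_corestr_def using nat_antisym' by blast
qed

lemma constell: "constellation P (C_comp m) C_D"
  unfolding constellation_def
proof (intro conjI ballI allI impI)
  fix x y z assume x: "x \<in> P" and y: "y \<in> P" and c: "C_comp m x y = Some z"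
  obtain a s where xs: "x = (a,s)" by (cases x)
  obtain b t where yt: "y = (b,t)" by (cases y)
  have sb: "m s b = s" and z: "z = (a, m s t)" using c xs yt by (auto split: if_splits)
  have aE: "a \<in> E" "m a s = s" "d a = d s" using x xs by (auto simp: CdE_iff)
  have bE: "b \<in> E" "m b t = t" "d b = d t" using y yt by (auto simp: CdE_iff)
  have "m s (d t) = s" using ed_le[of b t s] y yt sb by simp
  then have "d (m s t) = d s" using dcong[of s t] by simp
  moreover have "m a (m s t) = m s t" using aE(2) by (metis assoc)
  ultimately show "z \<in> P" using z aE by (simp add: CdE_iff)
next
  fix x assume "x \<in> P" then show "C_D x \<in> P"
    by (cases x) (auto simp: CdE_iff idem)
next
  fix x y z w' v assume x: "x \<in> P" and y: "y \<in> P" and z: "z \<in> P"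
    and h: "C_comp m y z = Some w' \<and> C_comp m x w' = Some v"
  obtain a s where xs: "x = (a,s)" by (cases x)
  obtain b t where yt: "y = (b,t)" by (cases y)
  obtain g u where zu: "z = (g,u)" by (cases z)
  show "\<exists>u. C_comp m x y = Some u \<and> C_comp m u z = Some v"
    using h xs yt zu by (auto split: if_splits simp: assoc)
next
  fix x y z assume x: "x \<in> P" and y: "y \<in> P" and z: "z \<in> P"
    and h: "C_comp m x y \<noteq> None \<and> C_comp m y z \<noteq> None"
  obtain a s where xs: "x = (a,s)" by (cases x)
  obtain b t where yt: "y = (b,t)" by (cases y)
  obtain g u where zu: "z = (g,u)" by (cases z)
  show "\<exists>w. C_comp m y z = Some w \<and> C_comp m x w \<noteq> None"
    using h xs yt zu by (auto split: if_splits)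
next
  fix x assume x: "x \<in> P"
  obtain a s where xs: "x = (a,s)" by (cases x)
  have aE: "a \<in> E" "m a s = s" "d a = d s" using x xs by (auto simp: CdE_iff)
  show "right_identity P (C_comp m) (C_D x)"
    unfolding right_identity_def using xs aE idem[of a] by (auto simp: CdE_iff split: if_splits)
  show "C_comp m (C_D x) x = Some x" using xs aE idem[of a] by simp
  fix e assume e: "right_identity P (C_comp m) e \<and> C_comp m e x = Some x"
  obtain b r where er: "e = (b,r)" by (cases e)
  have rP: "(b,r) \<in> P" and ri: "\<forall>p\<in>P. C_comp m p (b,r) \<noteq> None \<longrightarrow> C_comp m p (b,r) = Some p"
    using e er by (auto simp: right_identity_def)
  have ra: "m r a = r" and ba: "b = a" using e er xs by (auto split: if_splits)
  have aaP: "(a,a) \<in> P" using aE idem by (simp add: CdE_iff)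
  have "m a r = r" using rP ba by (simp add: CdE_iff)
  then have "C_comp m (a,a) (b,r) = Some (a, r)" using ba idem[OF aE(1)] by simp
  with ri aaP have "r = a" by auto
  then show "e = C_D x" using er ba xs by simp
qed

lemma normal: "normal_constellation P (C_comp m) C_D"
  unfolding normal_constellation_def
proof (intro conjI ballI impI constell)
  fix x assume "x \<in> P" then show "nat_le (C_comp m) C_D x x"
    by (cases x) (auto simp: nat_le_iff CdE_iff idem)
next
  fix x y z assume x: "x \<in> P" and y: "y \<in> P" and z: "z \<in> P"
    and h: "nat_le (C_comp m) C_D x y \<and> nat_le (C_comp m) C_D y z"
  obtain a s where xs: "x = (a,s)" by (cases x)
  obtain b t where yt: "y = (b,t)" by (cases y)
  obtain g u where zu: "z = (g,u)" by (cases z)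
  show "nat_le (C_comp m) C_D x z" using h unfolding xs yt zu nat_le_iff by (metis assoc)
next
  fix x y assume "x \<in> P" "y \<in> P" "nat_le (C_comp m) C_D x y \<and> nat_le (C_comp m) C_D y x"
  then show "x = y" using nat_antisym' by blast
qed

lemma DP: "e \<in> C_D ` P \<Longrightarrow> \<exists>g\<in>E. e = (g,g)"
  by (auto simp: CdE_iff C_D_def)

lemma O5:
  assumes x: "(a,s) \<in> P" and y: "(b,t) \<in> P" and g: "g \<in> E" and sb: "m s b = s"
  shows "w a (dot (m s t) g) = w a (dot s (w b (dot t g)))"
proof -
  have aE: "a \<in> E" "m a s = s" "d a = d s" using x by (auto simp: CdE_iff)
  have bE: "b \<in> E" "m b t = t" "d b = d t" using y by (auto simp: CdE_iff)
  define k where "k = w b (dot t g)"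
  have kE: "k \<in> E" using k_def wE bE dotE g by simp
  define h1 where "h1 = w a (dot (m s t) g)"
  define h2 where "h2 = w a (dot s k)"
  have h1E: "h1 \<in> E" using h1_def wE aE dotE g by simp
  have h2E: "h2 \<in> E" using h2_def wE aE dotE kE by simp
  have sdt: "m s (d t) = s" using ed_le[OF y sb] .
  have dst: "d (m s t) = d s" using dcong[of s t] sdt by simp
  have h1a: "m h1 a = h1" using h1_def w1 aE dotE g by simp
  have h1d: "m h1 (dot (m s t) g) = h1" using h1_def w2 aE dotE g by simp
  have h1ds: "m h1 (d s) = h1" using ed_le[OF x h1a] .
  have "m (m h1 (m s t)) g = m h1 (m s t)" using I1[OF g, of h1 "m s t"] h1d by simp
  then have A: "m (m (m h1 s) t) g = m (m h1 s) t" by (simp add: assoc)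
  have B: "m (m h1 s) (d t) = m h1 s" using sdt by (simp add: assoc)
  have "m (m h1 s) (dot t g) = m h1 s" using I1[OF g] A B by blast
  moreover have "m (m h1 s) b = m h1 s" using sb by (simp add: assoc)
  ultimately have "m (m h1 s) k = m h1 s" using I2[OF bE(1) dotE[OF g]] k_def by simp
  then have "m h1 (dot s k) = h1" using I1[OF kE, of h1 s] h1ds by simp
  then have le1: "m h1 h2 = h1" using I2[OF aE(1) dotE[OF kE] h1a] h2_def by simp
  have h2a: "m h2 a = h2" using h2_def w1 aE dotE kE by simp
  have h2d: "m h2 (dot s k) = h2" using h2_def w2 aE dotE kE by simp
  have C: "m (m h2 s) k = m h2 s" and h2ds: "m h2 (d s) = h2" using I1[OF kE, of h2 s] h2d by blast+
  have kd: "m k (dot t g) = k" using k_def w2 bE dotE g by simp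
  have "m (m h2 s) (dot t g) = m h2 s" by (metis C kd assoc)
  then have "m (m (m h2 s) t) g = m (m h2 s) t" using I1[OF g, of "m h2 s" t] by blast
  then have "m (m h2 (m s t)) g = m h2 (m s t)" by (simp add: assoc)
  moreover have "m h2 (d (m s t)) = h2" using dst h2ds by simp
  ultimately have "m h2 (dot (m s t) g) = h2" using I1[OF g, of h2 "m s t"] by blast
  then have le2: "m h2 h1 = h2" using I2[OF aE(1) dotE[OF g] h2a] h1_def by simp
  show ?thesis using antisym[OF h1E h2E le1 le2] h1_def h2_def k_def by simp
qed

lemma main: "inductive_constellation P (C_comp m) C_D"
  unfolding inductive_constellation_def
proof (intro conjI ballI allI impI normal)
  fix e a assume e: "e \<in> C_D ` P" and a: "a \<in> P"
  obtain g where g: "g \<in> E" "e = (g,g)" using DP[OF e] by blast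
  obtain f s where fs: "a = (f,s)" by (cases a)
  show "\<exists>x. is_corestr P (C_comp m) C_D a e x" using core[of f s g] a fs g by blast
next
  fix x y e z assume x: "x \<in> P" and y: "y \<in> P" and e: "e \<in> C_D ` P" and c: "C_comp m x y = Some z"
  obtain g where g: "g \<in> E" "e = (g,g)" using DP[OF e] by blast
  obtain a s where xs: "x = (a,s)" by (cases x)
  obtain b t where yt: "y = (b,t)" by (cases y)
  have sb: "m s b = s" and z: "z = (a, m s t)" using c xs yt by (auto split: if_splits)
  have zP: "z \<in> P" using constell x y c unfolding constellation_def by blast
  have kE: "w b (dot t g) \<in> E" using wE dotE g y yt by (simp add: CdE_iff)
  show "C_D (corestr P (C_comp m) C_D z e) = C_D (corestr P (C_comp m) C_D x (C_D (corestr P (C_comp m) C_D y e)))"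
    using corestr_eq[of a "m s t" g] corestr_eq[of b t g] corestr_eq[of a s "w b (dot t g)"]
      zP z x xs y yt g kE O5[of a s b t g] sb by (simp add: C_D_def)
qed

end

theorem proposition3p7:
  fixes m :: "'a \<Rightarrow> 'a \<Rightarrow> 'a" and d :: "'a \<Rightarrow> 'a" and E :: "'a set"
    and w :: "'a \<Rightarrow> 'a \<Rightarrow> 'a" and dot :: "'a \<Rightarrow> 'a \<Rightarrow> 'a"
  assumes "inductive_E_demigroup m d E w dot"
  shows "inductive_constellation (CdE m d E) (C_comp m) C_D \<and>
         (\<forall>f s e. (f, s) \<in> CdE m d E \<and> e \<in> E \<longrightarrow>
            corestr (CdE m d E) (C_comp m) C_D (f, s) (e, e) = (w f (dot s e), m (w f (dot s e)) s))"
proof -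
  interpret ied m d E w dot using assms by (unfold_locales)
  show ?thesis using main corestr_eq by blast
qed

end
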